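(* Let $\delta\in(0,\tfrac12)$ and $M>0$. There exists $n_0=n_0(\delta,M)$ such that for all $n>n_0$ and all integers $t$ with $n^{0.99}<t<n-n^{1/2+2\delta}$, writing $u=n-t$, the following assertions $(A_i)$ and $(B_i)$ hold for every nonnegative integer $i$ with $(1-\delta)^iu>n^{1/2+2\delta}$: $(A_i)$ For every $t$-intersecting family $\mathcal F\subseteq\Sigma_n$ there exists a family $\mathcal S$ of partial permutations such that (i) each element of $\mathcal S$ has size at most $t+(1-\delta)^iu$; (ii) $|\mathcal F\setminus\mathcal F[\mathcal S]|<\frac{2^i}{n^M}\cdot u!$; (iii) $\mathcal S$ is $(t-n^{1/2})$-intersecting. $(B_i)$ For every $t$-intersecting family $\mathcal F\subseteq\Sigma_n$ with $|\mathcal F|\ge\frac{2^{i+1}}{n^M}\cdot u!$ there exists $X\subseteq[n]^2$ with $|X|=t-n^{1/2}$ and $$|\mathcal F(X)|\ge \left(10n^{1/2-\delta}\right)^{-(1-\delta)^{i+1}u}|\mathcal F|.$$ (Non-integer quantities such as $n^{1/2}$ and $(1-\delta)^iu$ are to be rounded to integers; rounding is immaterial.)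
   Context: Each permutation $\sigma$ of $[n]=\{1,\dots,n\}$ is identified with the set $\{(1,\sigma(1)),\dots,(n,\sigma(n))\}\subseteq[n]^2$, and $\Sigma_n$ denotes the collection of these $n$-element sets. A partial permutation is a subset of some element of $\Sigma_n$. A family of sets is $s$-intersecting if any two members $A,B$ satisfy $|A\cap B|\ge s$. For a family $\mathcal F$ and a set $X$: $\mathcal F[X]=\{F\in\mathcal F:X\subseteq F\}$, $\mathcal F(X)=\{F\setminus X: F\in\mathcal F[X]\}$, and for a family $\mathcal S$, $\mathcal F[\mathcal S]=\bigcup_{A\in\mathcal S}\mathcal F[A]$. *)

theory Defs
  imports Complex_Main
begin

type_synonym cell = "nat \<times> nat"

definition perm_graph :: "nat \<Rightarrow> (nat \<Rightarrow> nat) \<Rightarrow> cell set" where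
  "perm_graph n \<sigma> = (\<lambda>k. (k, \<sigma> k)) ` {1..n}"

definition Sigma_n :: "nat \<Rightarrow> cell set set" where
  "Sigma_n n = {perm_graph n \<sigma> | \<sigma>. bij_betw \<sigma> {1..n} {1..n}}"

definition partial_perm :: "nat \<Rightarrow> cell set \<Rightarrow> bool" where
  "partial_perm n A \<longleftrightarrow> (\<exists>P \<in> Sigma_n n. A \<subseteq> P)"

definition s_intersecting :: "nat \<Rightarrow> 'a set set \<Rightarrow> bool" where
  "s_intersecting s \<F> \<longleftrightarrow> (\<forall>A\<in>\<F>. \<forall>B\<in>\<F>. s \<le> card (A \<inter> B))"

definition fam_contain :: "'a set set \<Rightarrow> 'a set \<Rightarrow> 'a set set" where
  "fam_contain \<F> X = {F \<in> \<F>. X \<subseteq> F}"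

definition fam_link :: "'a set set \<Rightarrow> 'a set \<Rightarrow> 'a set set" where
  "fam_link \<F> X = (\<lambda>F. F - X) ` fam_contain \<F> X"

definition fam_contain_any :: "'a set set \<Rightarrow> 'a set set \<Rightarrow> 'a set set" where
  "fam_contain_any \<F> \<S> = (\<Union>A\<in>\<S>. fam_contain \<F> A)"

end

theory Submission
  imports Defs "HOL-Real_Asymp.Real_Asymp"
begin


definition injgraph :: "'a set \<Rightarrow> 'b set \<Rightarrow> ('a \<times> 'b) set \<Rightarrow> bool" where
  "injgraph A B Z \<longleftrightarrow> Z \<subseteq> A \<times> B \<and> (\<forall>a\<in>A. \<exists>!b. (a,b) \<in> Z) \<and>
     (\<forall>a1 a2 b. (a1,b) \<in> Z \<longrightarrow> (a2,b) \<in> Z \<longrightarrow> a1 = a2)"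

lemma injgraph_card:
  assumes "finite A" "finite B" "card B = card A"
  shows "card {Z. injgraph A B Z} \<le> fact (card A)"
  using assms
proof (induction A arbitrary: B rule: finite_induct)
  case empty
  have "{Z. injgraph {} B Z} \<subseteq> {{}}" by (auto simp: injgraph_def)
  from card_mono[OF _ this] show ?case by simp
next
  case (insert a A)
  have sub: "{Z. injgraph (insert a A) B Z} \<subseteq> (\<Union>b\<in>B. insert (a,b) ` {Z'. injgraph A (B - {b}) Z'})"
  proof
    fix Z assume "Z \<in> {Z. injgraph (insert a A) B Z}"
    then have Z: "injgraph (insert a A) B Z" by simp
    then obtain b where ab: "(a,b) \<in> Z" by (auto simp: injgraph_def)
    then have bB: "b \<in> B" using Z by (auto simp: injgraph_def)
    have "injgraph A (B - {b}) (Z - {(a,b)})"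
      unfolding injgraph_def
    proof (intro conjI ballI allI impI)
      show "Z - {(a, b)} \<subseteq> A \<times> (B - {b})"
      proof
        fix x assume x: "x \<in> Z - {(a,b)}"
        obtain a' b' where xe: "x = (a',b')" by force
        have "a' \<in> insert a A" "b' \<in> B" using Z x xe by (auto simp: injgraph_def)
        moreover have "a' \<noteq> a"
        proof
          assume "a' = a"
          then have "b' = b" using Z x xe ab by (auto simp: injgraph_def)
          then show False using x xe \<open>a' = a\<close> by auto
        qed
        moreover have "b' \<noteq> b"
        proof
          assume "b' = b"
          then have "a' = a" using Z x xe ab unfolding injgraph_def by blast
          then show False using \<open>a' \<noteq> a\<close> by simp
        qed
        ultimately show "x \<in> A \<times> (B - {b})" using xe by auto
      qed
    next
      fix a' assume "a' \<in> A"
      then have "a' \<noteq> a" using insert.hyps by auto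
      from \<open>a' \<in> A\<close> Z obtain b' where "(a',b') \<in> Z" "\<forall>c. (a',c) \<in> Z \<longrightarrow> c = b'"
        unfolding injgraph_def by blast
      then show "\<exists>!b'. (a',b') \<in> Z - {(a,b)}" using \<open>a' \<noteq> a\<close> by blast
    next
      fix a1 a2 c assume "(a1,c) \<in> Z - {(a,b)}" "(a2,c) \<in> Z - {(a,b)}"
      then show "a1 = a2" using Z unfolding injgraph_def by blast
    qed
    moreover have "Z = insert (a,b) (Z - {(a,b)})" using ab by auto
    ultimately show "Z \<in> (\<Union>b\<in>B. insert (a,b) ` {Z'. injgraph A (B - {b}) Z'})"
      using bB by blast
  qed
  have fin: "finite {Z'. injgraph A (B - {b}) Z'}" for b
  proof -
    have "{Z'. injgraph A (B - {b}) Z'} \<subseteq> Pow (A \<times> B)" by (auto simp: injgraph_def)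
    then show ?thesis using insert.hyps insert.prems by (meson finite_Pow_iff finite_SigmaI rev_finite_subset)
  qed
  have "card {Z. injgraph (insert a A) B Z} \<le> card (\<Union>b\<in>B. insert (a,b) ` {Z'. injgraph A (B - {b}) Z'})"
    using sub fin insert.prems by (intro card_mono) auto
  also have "\<dots> \<le> (\<Sum>b\<in>B. card (insert (a,b) ` {Z'. injgraph A (B - {b}) Z'}))"
    by (rule card_UN_le) (use insert.prems in auto)
  also have "\<dots> \<le> (\<Sum>b\<in>B. card {Z'. injgraph A (B - {b}) Z'})"
    by (intro sum_mono card_image_le fin)
  also have "\<dots> \<le> (\<Sum>b\<in>B. fact (card A))"
  proof (intro sum_mono)
    fix b assume "b \<in> B"
    then have "card (B - {b}) = card A" using insert by auto
    then show "card {Z'. injgraph A (B - {b}) Z'} \<le> fact (card A)"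
      using insert.IH insert.prems by auto
  qed
  also have "\<dots> = card B * fact (card A)" by simp
  also have "\<dots> = fact (card (insert a A))" using insert by simp
  finally show ?case .
qed

lemma graph_mem: "(a,b) \<in> perm_graph n \<sigma> \<longleftrightarrow> a \<in> {1..n} \<and> b = \<sigma> a"
  unfolding perm_graph_def by auto

lemma graph_mem': "x \<in> perm_graph n \<sigma> \<longleftrightarrow> fst x \<in> {1..n} \<and> snd x = \<sigma> (fst x)"
  using graph_mem[of "fst x" "snd x"] by simp

lemma Sigma_n_elem:
  assumes "P \<in> Sigma_n n"
  obtains \<sigma> where "bij_betw \<sigma> {1..n} {1..n}" "P = perm_graph n \<sigma>"
  using assms unfolding Sigma_n_def by blast

lemma Sigma_n_sub: "P \<in> Sigma_n n \<Longrightarrow> P \<subseteq> {1..n} \<times> {1..n}"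
proof (elim Sigma_n_elem)
  fix \<sigma> assume b: "bij_betw \<sigma> {1..n} {1..n}" and P: "P = perm_graph n \<sigma>"
  show "P \<subseteq> {1..n} \<times> {1..n}"
  proof
    fix x assume "x \<in> P"
    then have x: "fst x \<in> {1..n}" "snd x = \<sigma> (fst x)" using P graph_mem' by blast+
    moreover have "\<sigma> (fst x) \<in> {1..n}" using b x(1) bij_betwE by blast
    ultimately show "x \<in> {1..n} \<times> {1..n}" by (simp add: mem_Times_iff)
  qed
qed

lemma Sigma_n_card: "P \<in> Sigma_n n \<Longrightarrow> card P = n"
proof (elim Sigma_n_elem)
  fix \<sigma> assume "P = perm_graph n \<sigma>"
  moreover have "inj_on (\<lambda>k. (k, \<sigma> k)) {1..n}" by (rule inj_onI) simp
  ultimately show "card P = n" by (simp add: perm_graph_def card_image)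
qed

lemma finite_Sigma_n: "finite (Sigma_n n)"
proof -
  have "Sigma_n n \<subseteq> Pow ({1..n} \<times> {1..n})" using Sigma_n_sub by blast
  then show ?thesis by (rule finite_subset) simp
qed

lemma finite_fam: "\<F> \<subseteq> Sigma_n n \<Longrightarrow> finite \<F>"
  using finite_Sigma_n finite_subset by blast

lemma card_contain_le_Sigma: "card (fam_contain (Sigma_n n) Y) \<le> fact (n - card Y)"
proof (cases "fam_contain (Sigma_n n) Y = {}")
  case True then show ?thesis by simp
next
  case False
  then obtain P0 where P0: "P0 \<in> Sigma_n n" "Y \<subseteq> P0" by (auto simp: fam_contain_def)
  obtain \<sigma>0 where s0: "bij_betw \<sigma>0 {1..n} {1..n}" "P0 = perm_graph n \<sigma>0"
    using Sigma_n_elem[OF P0(1)] by blast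
  have i0: "inj_on \<sigma>0 {1..n}" using s0 bij_betw_def by blast
  define D where "D = fst ` Y"
  define R where "R = snd ` Y"
  have Ysub: "Y \<subseteq> {1..n} \<times> {1..n}" using P0 Sigma_n_sub by blast
  have finY: "finite Y" using Ysub by (rule finite_subset) simp
  have injf: "inj_on fst Y"
  proof (rule inj_onI)
    fix x y assume xy: "x \<in> Y" "y \<in> Y" "fst x = fst y"
    then have "snd x = \<sigma>0 (fst x)" "snd y = \<sigma>0 (fst y)" using P0(2) s0(2) graph_mem' by blast+
    then show "x = y" using xy(3) by (simp add: prod_eq_iff)
  qed
  have injs: "inj_on snd Y"
  proof (rule inj_onI)
    fix x y assume xy: "x \<in> Y" "y \<in> Y" "snd x = snd y"
    then have "snd x = \<sigma>0 (fst x)" "snd y = \<sigma>0 (fst y)" "fst x \<in> {1..n}" "fst y \<in> {1..n}"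
      using P0(2) s0(2) graph_mem' by blast+
    then have "fst x = fst y" using xy(3) inj_onD[OF i0] by metis
    then show "x = y" using xy(3) by (simp add: prod_eq_iff)
  qed
  have cD: "card D = card Y" unfolding D_def using injf by (simp add: card_image)
  have cR: "card R = card Y" unfolding R_def using injs by (simp add: card_image)
  have DS: "D \<subseteq> {1..n}" "R \<subseteq> {1..n}" using Ysub unfolding D_def R_def by auto
  have cA: "card ({1..n} - D) = n - card Y" using DS cD by (simp add: card_Diff_subset finite_subset)
  have cB: "card ({1..n} - R) = n - card Y" using DS cR by (simp add: card_Diff_subset finite_subset)
  have inj: "inj_on (\<lambda>P. P - Y) (fam_contain (Sigma_n n) Y)"
  proof (rule inj_onI)
    fix P P' assume "P \<in> fam_contain (Sigma_n n) Y" "P' \<in> fam_contain (Sigma_n n) Y" "P - Y = P' - Y"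
    then have "Y \<subseteq> P" "Y \<subseteq> P'" "P - Y = P' - Y" by (auto simp: fam_contain_def)
    then show "P = P'" by (metis Diff_partition)
  qed
  have img: "(\<lambda>P. P - Y) ` fam_contain (Sigma_n n) Y \<subseteq> {Z. injgraph ({1..n} - D) ({1..n} - R) Z}"
  proof
    fix Z assume "Z \<in> (\<lambda>P. P - Y) ` fam_contain (Sigma_n n) Y"
    then obtain P where P: "P \<in> Sigma_n n" "Y \<subseteq> P" "Z = P - Y" by (auto simp: fam_contain_def)
    obtain \<sigma> where s: "bij_betw \<sigma> {1..n} {1..n}" "P = perm_graph n \<sigma>"
      using Sigma_n_elem[OF P(1)] by blast
    have injs: "inj_on \<sigma> {1..n}" and ims: "\<And>k. k \<in> {1..n} \<Longrightarrow> \<sigma> k \<in> {1..n}"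
      using s bij_betwE bij_betw_def by blast+
    have memP: "\<And>x. x \<in> P \<longleftrightarrow> fst x \<in> {1..n} \<and> snd x = \<sigma> (fst x)" using s(2) graph_mem' by blast
    show "Z \<in> {Z. injgraph ({1..n} - D) ({1..n} - R) Z}"
      unfolding injgraph_def mem_Collect_eq
    proof (intro conjI ballI allI impI)
      show "Z \<subseteq> ({1..n} - D) \<times> ({1..n} - R)"
      proof
        fix x assume x: "x \<in> Z"
        then have k: "fst x \<in> {1..n}" "snd x = \<sigma> (fst x)" "x \<notin> Y" using P memP by auto
        have "\<sigma> (fst x) \<in> {1..n}" using k ims by auto
        moreover have "fst x \<notin> D"
        proof
          assume "fst x \<in> D"
          then obtain y where y: "y \<in> Y" "fst y = fst x" by (auto simp: D_def)
          then have "y \<in> P" using P by auto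
          then have "snd y = \<sigma> (fst y)" using memP by blast
          then have "y = x" using y k by (simp add: prod_eq_iff)
          then show False using k y by simp
        qed
        moreover have "snd x \<notin> R"
        proof
          assume "snd x \<in> R"
          then obtain y where y: "y \<in> Y" "snd y = snd x" by (auto simp: R_def)
          then have "y \<in> P" using P by auto
          then have "snd y = \<sigma> (fst y)" "fst y \<in> {1..n}" using memP by blast+
          then have "fst y = fst x" using y k inj_onD[OF injs] by metis
          then have "y = x" using y by (simp add: prod_eq_iff)
          then show False using k y by simp
        qed
        ultimately show "x \<in> ({1..n} - D) \<times> ({1..n} - R)" using k by (simp add: mem_Times_iff)
      qed
    next
      fix a assume a: "a \<in> {1..n} - D"
      then have "(a, \<sigma> a) \<notin> Y" unfolding D_def by force
      moreover have "(a, \<sigma> a) \<in> P" using a memP by simp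
      ultimately have "(a, \<sigma> a) \<in> Z" using P by simp
      moreover have "b = \<sigma> a" if "(a,b) \<in> Z" for b using that P memP by auto
      ultimately show "\<exists>!b. (a, b) \<in> Z" by blast
    next
      fix a1 a2 b assume "(a1, b) \<in> Z" "(a2, b) \<in> Z"
      then have "(a1, b) \<in> P" "(a2, b) \<in> P" using P by auto
      then have "b = \<sigma> a1" "b = \<sigma> a2" "a1 \<in> {1..n}" "a2 \<in> {1..n}" using memP by auto
      then show "a1 = a2" using inj_onD[OF injs] by metis
    qed
  qed
  have "card (fam_contain (Sigma_n n) Y) = card ((\<lambda>P. P - Y) ` fam_contain (Sigma_n n) Y)"
    using inj by (simp add: card_image)
  also have "\<dots> \<le> card {Z. injgraph ({1..n} - D) ({1..n} - R) Z}"
  proof (rule card_mono[OF _ img])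
    have "{Z. injgraph ({1..n} - D) ({1..n} - R) Z} \<subseteq> Pow ({1..n} \<times> {1..n})"
      by (auto simp: injgraph_def)
    then show "finite {Z. injgraph ({1..n} - D) ({1..n} - R) Z}"
      by (rule finite_subset) simp
  qed
  also have "\<dots> \<le> fact (n - card Y)"
    using injgraph_card[of "{1..n} - D" "{1..n} - R"] cA cB by simp
  finally show ?thesis .
qed

lemma card_contain_le:
  assumes "\<F> \<subseteq> Sigma_n n"
  shows "card (fam_contain \<F> Y) \<le> fact (n - card Y)"
proof -
  have "fam_contain \<F> Y \<subseteq> fam_contain (Sigma_n n) Y" using assms by (auto simp: fam_contain_def)
  then have "card (fam_contain \<F> Y) \<le> card (fam_contain (Sigma_n n) Y)"
    by (rule card_mono[rotated]) (simp add: fam_contain_def finite_Sigma_n)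
  then show ?thesis using card_contain_le_Sigma[of n Y] by linarith
qed

lemma card_link: "card (fam_link \<F> X) = card (fam_contain \<F> X)"
proof -
  have "inj_on (\<lambda>F. F - X) (fam_contain \<F> X)"
  proof (rule inj_onI)
    fix P P' assume "P \<in> fam_contain \<F> X" "P' \<in> fam_contain \<F> X" "P - X = P' - X"
    then have "X \<subseteq> P" "X \<subseteq> P'" "P - X = P' - X" by (auto simp: fam_contain_def)
    then show "P = P'" by (metis Diff_partition)
  qed
  then show ?thesis by (simp add: fam_link_def card_image)
qed



lemma pow_fact_le_exp:
  fixes x :: real assumes "0 \<le> x"
  shows "x ^ n / fact n \<le> exp x"
proof -
  let ?f = "\<lambda>k. x ^ k /\<^sub>R fact k"
  have s: "?f sums exp x" by (rule exp_converges)
  have "x ^ n / fact n = sum ?f {n}" by (simp add: divide_inverse mult.commute)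
  also have "\<dots> \<le> suminf ?f"
    using s assms by (intro sum_le_suminf) (auto simp: sums_iff)
  also have "\<dots> = exp x" using s by (simp add: sums_iff)
  finally show ?thesis .
qed

lemma fact_ge_pow_e: "(real m / exp 1) ^ m \<le> fact m"
proof -
  have "real m ^ m / fact m \<le> exp (real m)" by (rule pow_fact_le_exp) simp
  also have "exp (real m) = exp 1 ^ m" by (simp add: exp_of_nat_mult[symmetric])
  finally have "real m ^ m \<le> exp 1 ^ m * fact m" by (simp add: divide_le_eq)
  then show ?thesis by (simp add: power_divide divide_le_eq mult.commute)
qed

lemma ffact_ge:
  assumes "m \<le> u"
  shows "fact (u - m) * (real u / exp 1) ^ m \<le> fact u"
proof (cases "m = 0")
  case True then show ?thesis by simp
next
  case False
  have b: "(real u / real m) ^ m \<le> real (u choose m)" using binomial_ge_n_over_k_pow_k[OF assms] by simp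
  have eq: "fact u = fact m * fact (u - m) * real (u choose m)"
    using binomial_fact_lemma[OF assms] by (metis of_nat_fact of_nat_mult)
  have "(real u / exp 1) ^ m = (real u / real m) ^ m * (real m / exp 1) ^ m"
    using False by (simp add: power_mult_distrib[symmetric])
  also have "\<dots> \<le> real (u choose m) * fact m"
    by (intro mult_mono b fact_ge_pow_e) auto
  finally have "fact (u - m) * (real u / exp 1) ^ m \<le> fact (u - m) * (real (u choose m) * fact m)"
    by (intro mult_left_mono) auto
  also have "\<dots> = fact u" using eq by simp
  finally show ?thesis .
qed

lemma binom_le_pow_fact: "real (m choose d) \<le> real m ^ d / fact d"
proof (cases "d \<le> m")
  case True
  have "fact d * fact (m - d) * (m choose d) = fact m" by (rule binomial_fact_lemma[OF True])
  then have "(m choose d) * fact d = fact m div fact (m - d)"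
    by (metis fact_nonzero mult.commute nonzero_mult_div_cancel_left mult.assoc)
  also have "\<dots> \<le> m ^ d" by (rule fact_div_fact_le_pow[OF True])
  finally have "real ((m choose d) * fact d) \<le> real (m ^ d)" by linarith
  then show ?thesis by (simp add: field_simps)
next
  case False then have "m choose d = 0" by simp
  show ?thesis unfolding \<open>m choose d = 0\<close> by simp
qed

lemma numB:
  fixes N k \<delta> q :: real and m d :: nat
  assumes N1: "1 \<le> N" and d0: "0 < \<delta>" "\<delta> < 1/2" and kl: "N powr (1/2+2*\<delta>) \<le> k" and ku: "k \<le> N"
    and mN: "real m \<le> N" and dq: "real d \<le> q + k" and q0: "0 \<le> q" and qN: "q \<le> sqrt N"
    and E1: "ln 2 + 1 + N powr (-2*\<delta>) * ln N / 2 \<le> \<delta>/2 * ln N"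
  shows "2 * real (m choose d) \<le> (10 * N powr (1/2-\<delta>)) powr ((1-\<delta>)*k)"
proof -
  have Np: "0 < N" using N1 by simp
  have "1 \<le> N powr (1/2+2*\<delta>)" using N1 d0 by (simp add: ge_one_powr_ge_zero)
  then have k1: "1 \<le> k" using kl by simp
  then have kp: "0 < k" by simp
  have h1: "real (m choose d) \<le> N ^ d / fact d"
  proof -
    have "real (m choose d) \<le> real m ^ d / fact d" by (rule binom_le_pow_fact)
    also have "\<dots> \<le> N ^ d / fact d"
      by (intro divide_right_mono power_mono mN) auto
    finally show ?thesis .
  qed
  have h2: "N ^ d / fact d = (N / k) ^ d * (k ^ d / fact d)"
    using kp by (simp add: power_divide)
  have h3: "k ^ d / fact d \<le> exp k" using kp by (intro pow_fact_le_exp) simp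
  have Nk1: "1 \<le> N / k" using ku kp by simp
  have h4: "(N / k) ^ d \<le> (N / k) powr (q + k)"
  proof -
    have "(N / k) ^ d = (N / k) powr (real d)" using Nk1 by (simp add: powr_realpow)
    also have "\<dots> \<le> (N / k) powr (q + k)" using Nk1 dq by (intro powr_mono) auto
    finally show ?thesis .
  qed
  have NkN: "N / k \<le> N powr (1/2 - 2*\<delta>)"
  proof -
    have e: "N = N powr (1/2+2*\<delta>) * N powr (1/2 - 2*\<delta>)"
      using Np by (simp add: powr_add[symmetric])
    have "N / k \<le> N / N powr (1/2+2*\<delta>)"
      using kl Np kp by (intro divide_left_mono) auto
    also have "\<dots> = N powr 1 / N powr (1/2+2*\<delta>)" using Np by simp
    also have "\<dots> = N powr (1 - (1/2+2*\<delta>))" by (rule powr_diff[symmetric])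
    also have "1 - (1/2+2*\<delta>) = 1/2 - 2*\<delta>" by simp
    finally show ?thesis .
  qed
  have h5: "(N / k) powr (q + k) \<le> exp ((1/2 - 2*\<delta>) * ln N * (q + k))"
  proof -
    have "(N / k) powr (q + k) \<le> (N powr (1/2 - 2*\<delta>)) powr (q + k)"
      using NkN Nk1 q0 kp by (intro powr_mono2) auto
    also have "\<dots> = exp ((1/2 - 2*\<delta>) * ln N * (q + k))"
      using Np by (simp add: powr_powr powr_def mult.commute mult.left_commute)
    finally show ?thesis .
  qed
  have lhs: "2 * real (m choose d) \<le> exp (ln 2 + (1/2 - 2*\<delta>) * ln N * (q + k) + k)"
  proof -
    have "2 * real (m choose d) \<le> 2 * ((N / k) ^ d * (k ^ d / fact d))" using h1 h2 by simp
    also have "\<dots> \<le> 2 * (exp ((1/2 - 2*\<delta>) * ln N * (q + k)) * exp k)"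
      using h3 h4 h5 kp by (intro mult_left_mono mult_mono) auto
    also have "\<dots> = exp (ln 2 + (1/2 - 2*\<delta>) * ln N * (q + k) + k)"
      by (simp add: exp_add)
    finally show ?thesis .
  qed
  have rhs: "(10 * N powr (1/2-\<delta>)) powr ((1-\<delta>)*k) = exp ((1-\<delta>)*k * (ln 10 + (1/2-\<delta>) * ln N))"
    using Np by (simp add: powr_def ln_mult)
  have qk: "q \<le> k * N powr (-2*\<delta>)"
  proof -
    have "sqrt N = N powr (1/2)" using Np by (simp add: powr_half_sqrt)
    also have "\<dots> = N powr (1/2+2*\<delta> + (-2*\<delta>))" by simp
    also have "\<dots> = N powr (1/2+2*\<delta>) * N powr (-2*\<delta>)" by (rule powr_add)
    also have "\<dots> \<le> k * N powr (-2*\<delta>)" using kl by (intro mult_right_mono) auto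
    finally show ?thesis using qN by simp
  qed
  have Lg: "0 \<le> ln N" using N1 by simp
  have P0: "0 \<le> N powr (-2*\<delta>)" by simp
  have a1: "(1/2 - 2*\<delta>) * ln N * q \<le> (1/2) * ln N * (k * N powr (-2*\<delta>))"
  proof -
    have "(1/2 - 2*\<delta>) * ln N * q \<le> (1/2) * ln N * q" using Lg q0 d0 by (intro mult_right_mono) auto
    also have "\<dots> \<le> (1/2) * ln N * (k * N powr (-2*\<delta>))" using qk Lg by (intro mult_left_mono) auto
    finally show ?thesis .
  qed
  have a2: "k * (ln 2 + 1 + N powr (-2*\<delta>) * ln N / 2) \<le> k * (\<delta>/2 * ln N)"
    using E1 kp by (intro mult_left_mono) auto
  have a3: "ln 2 \<le> k * ln 2" using k1 by simp
  have a4: "0 \<le> (1-\<delta>)*k * ln 10" using d0 kp by simp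
  have a5: "0 \<le> \<delta> * \<delta> * k * ln N" using kp Lg by simp
  have "ln 2 + (1/2 - 2*\<delta>) * ln N * (q + k) + k
      = ln 2 + (1/2 - 2*\<delta>) * ln N * q + (1/2 - 2*\<delta>) * ln N * k + k" by (simp add: algebra_simps)
  also have "\<dots> \<le> k * ln 2 + (1/2) * ln N * (k * N powr (-2*\<delta>)) + (1/2 - 2*\<delta>) * ln N * k + k"
    using a1 a3 by linarith
  also have "\<dots> = k * (ln 2 + 1 + N powr (-2*\<delta>) * ln N / 2) + (1/2 - 2*\<delta>) * ln N * k"
    by (simp add: algebra_simps)
  also have "\<dots> \<le> k * (\<delta>/2 * ln N) + (1/2 - 2*\<delta>) * ln N * k" using a2 by linarith
  also have "\<dots> = (1-\<delta>)*k * ((1/2-\<delta>) * ln N) - \<delta> * \<delta> * k * ln N" by (simp add: algebra_simps)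
  also have "\<dots> \<le> (1-\<delta>)*k * ((1/2-\<delta>) * ln N)" using a5 by linarith
  also have "\<dots> \<le> (1-\<delta>)*k * (ln 10 + (1/2-\<delta>) * ln N)" using a4 by (simp add: algebra_simps)
  finally have "ln 2 + (1/2 - 2*\<delta>) * ln N * (q + k) + k \<le> (1-\<delta>)*k * (ln 10 + (1/2-\<delta>) * ln N)" .
  then have "exp (ln 2 + (1/2 - 2*\<delta>) * ln N * (q + k) + k) \<le> exp ((1-\<delta>)*k * (ln 10 + (1/2-\<delta>) * ln N))"
    by simp
  then show ?thesis using lhs rhs by linarith
qed

lemma num1:
  fixes N \<delta> M k' :: real and u m q :: nat
  assumes N1: "1 < N" and d0: "0 < \<delta>" "\<delta> < 1/2"
    and kl: "N powr (1/2+2*\<delta>) \<le> k'" and mk: "k' < real m" and mu: "m \<le> u"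
    and uN: "real u \<le> N" and u0: "0 < u" and qN: "real q \<le> sqrt N"
    and E2: "sqrt N + M < \<delta>/2 * N powr (1/2+2*\<delta>)"
  shows "(real u / (exp 1 * (10 * N powr (1/2-\<delta>)) * N powr (\<delta>/2)))^(m+q) * fact(u-m)
          * (10 * N powr (1/2-\<delta>)) powr k' * N powr M < fact u"
proof -
  define \<rho> where "\<rho> = 10 * N powr (1/2-\<delta>)"
  define B where "B = \<rho> * N powr (\<delta>/2)"
  define r where "r = real u / (exp 1 * B)"
  have Np: "0 < N" using N1 by simp
  have "1 \<le> N powr (1/2-\<delta>)" using N1 d0 by (simp add: ge_one_powr_ge_zero)
  then have \<rho>1: "1 \<le> \<rho>" unfolding \<rho>_def by simp
  have "1 \<le> N powr (\<delta>/2)" using N1 d0 by (simp add: ge_one_powr_ge_zero)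
  then have B1: "1 \<le> B" unfolding B_def using \<rho>1 by (metis mult_mono' mult_1 zero_le_one)
  have eB: "1 \<le> exp 1 * B" using B1 by (metis exp_ge_add_one_self add_0 exp_zero mult_mono' mult_1 zero_le_one one_le_exp_iff)
  have rp: "0 < r" unfolding r_def using u0 B1 by simp
  have ru: "r \<le> real u" unfolding r_def using eB u0 by (simp add: divide_le_eq)
  have rB: "r * B = real u / exp 1" unfolding r_def using B1 by simp
  have k'0: "0 \<le> k'" using kl by (metis order_trans powr_ge_zero)
  have Bm: "\<rho> powr k' * N powr (\<delta>/2 * k') \<le> B ^ m"
  proof -
    have "\<rho> powr k' * N powr (\<delta>/2 * k') = B powr k'"
      unfolding B_def using \<rho>1 Np by (simp add: powr_mult powr_powr)
    also have "\<dots> \<le> B powr (real m)" using B1 mk by (intro powr_mono) auto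
    also have "\<dots> = B ^ m" using B1 by (simp add: powr_realpow)
    finally show ?thesis .
  qed
  have rq: "r ^ q \<le> N powr (sqrt N)"
  proof -
    have "r ^ q \<le> N ^ q" using rp ru uN by (intro power_mono) auto
    also have "\<dots> = N powr (real q)" using Np by (simp add: powr_realpow)
    also have "\<dots> \<le> N powr (sqrt N)" using N1 qN by (intro powr_mono) auto
    finally show ?thesis .
  qed
  have ex: "N powr (sqrt N + M) < N powr (\<delta>/2 * k')"
  proof -
    have "\<delta>/2 * N powr (1/2+2*\<delta>) \<le> \<delta>/2 * k'" using kl d0 by (intro mult_left_mono) auto
    then have "sqrt N + M < \<delta>/2 * k'" using E2 by linarith
    then show ?thesis using N1 by (intro powr_less_mono) auto
  qed
  have key: "r ^ q * \<rho> powr k' * N powr M < B ^ m"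
  proof -
    have "r ^ q * \<rho> powr k' * N powr M \<le> N powr (sqrt N) * \<rho> powr k' * N powr M"
      using rq by (intro mult_right_mono) auto
    also have "\<dots> = \<rho> powr k' * N powr (sqrt N + M)" by (simp add: powr_add)
    also have "\<dots> < \<rho> powr k' * N powr (\<delta>/2 * k')" using ex \<rho>1 by simp
    also have "\<dots> \<le> B ^ m" by (rule Bm)
    finally show ?thesis .
  qed
  have "r^(m+q) * fact(u-m) * \<rho> powr k' * N powr M = fact(u-m) * r^m * (r ^ q * \<rho> powr k' * N powr M)"
    by (simp add: power_add algebra_simps)
  also have "\<dots> < fact(u-m) * r^m * B ^ m" using key rp by simp
  also have "\<dots> = fact(u-m) * (real u / exp 1) ^ m" by (simp add: rB[symmetric] power_mult_distrib)
  also have "\<dots> \<le> fact u" by (rule ffact_ge[OF mu])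
  finally show ?thesis unfolding r_def B_def \<rho>_def by (simp add: mult.assoc)
qed

lemma num2:
  fixes N \<delta> k' :: real and a y1 t q u n :: nat
  assumes N1: "1 \<le> N" and d0: "0 < \<delta>" "\<delta> < 1/2"
    and as: "a < t - q" and qt: "q \<le> t" and y1: "real y1 \<le> real t + k'" and ku: "k' \<le> real u"
    and nn: "n = t + u" and qN: "real q \<le> sqrt N" and qN2: "sqrt N < real q + 1"
    and sNu: "sqrt N \<le> real u" and u1: "1 \<le> u"
    and E3: "60 * exp 1 \<le> N powr (\<delta>/2)"
  shows "real a + (real y1 - real a + real n - real a) /
           (real u / (exp 1 * (10 * N powr (1/2-\<delta>)) * N powr (\<delta>/2))) < real t"
proof -
  define L where "L = exp 1 * (10 * N powr (1/2-\<delta>)) * N powr (\<delta>/2)"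
  define r where "r = real u / L"
  have Np: "0 < N" using N1 by simp
  have Lp: "0 < L" unfolding L_def using Np by simp
  have sq: "sqrt N = N powr (1/2-\<delta>) * N powr (\<delta>/2) * N powr (\<delta>/2)"
  proof -
    have "sqrt N = N powr (1/2)" using Np by (simp add: powr_half_sqrt)
    also have "\<dots> = N powr ((1/2-\<delta>) + \<delta>/2 + \<delta>/2)" by simp
    also have "\<dots> = N powr (1/2-\<delta>) * N powr (\<delta>/2) * N powr (\<delta>/2)" by (simp only: powr_add)
    finally show ?thesis .
  qed
  have L6: "6 * L \<le> sqrt N"
  proof -
    have "6 * L = (60 * exp 1) * (N powr (1/2-\<delta>) * N powr (\<delta>/2))" unfolding L_def by simp
    also have "\<dots> \<le> N powr (\<delta>/2) * (N powr (1/2-\<delta>) * N powr (\<delta>/2))"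
      using E3 by (intro mult_right_mono) auto
    also have "\<dots> = sqrt N" using sq by simp
    finally show ?thesis .
  qed
  have r6: "6 \<le> r" unfolding r_def using L6 sNu Lp by (simp add: le_divide_eq)
  have rp: "0 < r" using r6 by simp
  have a1: "real a \<le> real t - real q - 1" using as qt by linarith
  have c: "1 - 2 / r \<ge> 0" using r6 by (simp add: field_simps)
  have "real a + (real y1 - real a + real n - real a) / r = real a * (1 - 2 / r) + (real y1 + real n) / r"
    using rp by (simp add: field_simps)
  also have "\<dots> \<le> (real t - real q - 1) * (1 - 2 / r) + (real t + k' + real n) / r"
    using a1 c y1 rp by (intro add_mono mult_right_mono divide_right_mono) auto
  also have "\<dots> = real t - real q - 1 + (k' + real u + 2 * real q + 2) / r"
    using rp nn by (simp add: field_simps)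
  also have "\<dots> \<le> real t - real q - 1 + (6 * real u) / r"
    using ku qN sNu u1 rp by (intro add_left_mono divide_right_mono) auto
  also have "(6 * real u) / r = 6 * L" unfolding r_def using Lp u1 by simp
  finally have "real a + (real y1 - real a + real n - real a) / r \<le> real t - real q - 1 + 6 * L" .
  also have "\<dots> < real t" using L6 qN2 by linarith
  finally show ?thesis unfolding r_def L_def .
qed



lemma double_count:
  assumes "finite A" "finite B"
  shows "(\<Sum>a\<in>A. card {b\<in>B. R a b}) = (\<Sum>b\<in>B. card {a\<in>A. R a b})"
proof -
  have "(\<Sum>a\<in>A. card {b\<in>B. R a b}) = (\<Sum>a\<in>A. \<Sum>b\<in>B. if R a b then 1 else 0)"
    using assms by (simp add: sum.inter_filter[symmetric])
  also have "\<dots> = (\<Sum>b\<in>B. \<Sum>a\<in>A. if R a b then 1 else 0)" by (rule sum.swap)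
  also have "\<dots> = (\<Sum>b\<in>B. card {a\<in>A. R a b})"
    using assms by (simp add: sum.inter_filter[symmetric])
  finally show ?thesis .
qed

lemma sum_card_inter:
  assumes "finite A" "finite W"
  shows "(\<Sum>P\<in>A. card (W \<inter> P)) = (\<Sum>z\<in>W. card {P\<in>A. z \<in> P})"
proof -
  have "(\<Sum>P\<in>A. card (W \<inter> P)) = (\<Sum>P\<in>A. card {z\<in>W. z \<in> P})"
    by (intro sum.cong) (auto intro: arg_cong[where f=card])
  also have "\<dots> = (\<Sum>z\<in>W. card {P\<in>A. z \<in> P})" by (rule double_count[OF assms])
  finally show ?thesis .
qed

definition spread :: "real \<Rightarrow> 'a set set \<Rightarrow> 'a set \<Rightarrow> bool" where
  "spread r H Y \<longleftrightarrow> (\<forall>z. z \<notin> Y \<longrightarrow>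
      real (card (fam_contain H (insert z Y))) * r \<le> real (card (fam_contain H Y)))"

lemma contain_insert: "{P \<in> fam_contain H Y. z \<in> P} = fam_contain H (insert z Y)"
  by (auto simp: fam_contain_def)

lemma spread_sum:
  assumes sp: "spread r H Y" and r: "0 < r" and fin: "finite (fam_contain H Y)" and W: "finite W" "W \<inter> Y = {}"
  shows "real (\<Sum>P\<in>fam_contain H Y. card (W \<inter> P)) \<le> real (card W) * real (card (fam_contain H Y)) / r"
proof -
  have "real (\<Sum>P\<in>fam_contain H Y. card (W \<inter> P)) = (\<Sum>z\<in>W. real (card (fam_contain H (insert z Y))))"
    using sum_card_inter[OF fin W(1)] by (simp add: contain_insert)
  also have "\<dots> \<le> (\<Sum>z\<in>W. real (card (fam_contain H Y)) / r)"
  proof (intro sum_mono)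
    fix z assume "z \<in> W"
    then have "z \<notin> Y" using W by auto
    then show "real (card (fam_contain H (insert z Y))) \<le> real (card (fam_contain H Y)) / r"
      using sp r unfolding spread_def by (simp add: le_divide_eq)
  qed
  also have "\<dots> = real (card W) * real (card (fam_contain H Y)) / r" by simp
  finally show ?thesis .
qed

lemma spread_inter:
  assumes FS: "\<F> \<subseteq> Sigma_n n" and Ft: "s_intersecting t \<F>"
    and H: "H1 \<subseteq> \<F>" "H2 \<subseteq> \<F>" and ne: "fam_contain H1 Y1 \<noteq> {}" "fam_contain H2 Y2 \<noteq> {}"
    and sp: "spread r H1 Y1" "spread r H2 Y2" and r: "0 < r"
  shows "real t \<le> real (card (Y1 \<inter> Y2)) +
           (real (card Y1) - real (card (Y1 \<inter> Y2)) + real n - real (card (Y1 \<inter> Y2))) / r"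
proof -
  define A1 where "A1 = fam_contain H1 Y1"
  define A2 where "A2 = fam_contain H2 Y2"
  define a where "a = card (Y1 \<inter> Y2)"
  have A1S: "A1 \<subseteq> \<F>" "A2 \<subseteq> \<F>" using H unfolding A1_def A2_def fam_contain_def by auto
  have fin1: "finite A1" and fin2: "finite A2" using A1S FS finite_fam by (meson order_trans)+
  have ne1: "A1 \<noteq> {}" and ne2: "A2 \<noteq> {}" using ne unfolding A1_def A2_def by auto
  have memY1: "Y1 \<subseteq> P" if "P \<in> A1" for P using that unfolding A1_def fam_contain_def by auto
  have memY2: "Y2 \<subseteq> P" if "P \<in> A2" for P using that unfolding A2_def fam_contain_def by auto
  have finP: "finite P" if "P \<in> \<F>" for P using that FS Sigma_n_sub
    by (meson finite_SigmaI finite_atLeastAtMost finite_subset subsetD)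
  have cardP: "card P = n" if "P \<in> \<F>" for P using that FS Sigma_n_card by blast
  obtain P1' where "P1' \<in> A1" using ne1 by auto
  then have finY1: "finite Y1" using memY1 finP A1S by (meson finite_subset subsetD)
  have aY1: "a \<le> card Y1" unfolding a_def using finY1 by (intro card_mono) auto
  have pair: "real t \<le> real a + real (card ((Y1 - Y2) \<inter> P2)) + real (card ((P2 - Y1) \<inter> P1))"
    if P1: "P1 \<in> A1" and P2: "P2 \<in> A2" for P1 P2
  proof -
    have "t \<le> card (P1 \<inter> P2)" using Ft A1S P1 P2 unfolding s_intersecting_def by blast
    also have "P1 \<inter> P2 \<subseteq> (Y1 \<inter> Y2) \<union> ((Y1 - Y2) \<inter> P2) \<union> ((P2 - Y1) \<inter> P1)" by blast
    then have "card (P1 \<inter> P2) \<le> card ((Y1 \<inter> Y2) \<union> ((Y1 - Y2) \<inter> P2) \<union> ((P2 - Y1) \<inter> P1))"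
      using finY1 finP[of P1] P1 A1S by (intro card_mono) auto
    also have "\<dots> \<le> a + card ((Y1 - Y2) \<inter> P2) + card ((P2 - Y1) \<inter> P1)"
      unfolding a_def by (meson add_le_mono card_Un_le le_refl order_trans)
    finally show ?thesis by linarith
  qed
  have S2: "real (\<Sum>P2\<in>A2. card ((Y1 - Y2) \<inter> P2)) \<le> (real (card Y1) - real a) * real (card A2) / r"
  proof -
    have "real (\<Sum>P2\<in>A2. card ((Y1 - Y2) \<inter> P2)) \<le> real (card (Y1 - Y2)) * real (card A2) / r"
      unfolding A2_def using sp(2) r fin2 finY1 by (intro spread_sum) (auto simp: A2_def)
    also have "card (Y1 - Y2) = card Y1 - a" unfolding a_def using finY1
      by (metis Diff_Int2 card_Diff_subset_Int finite_Int inf.cobounded1 inf_commute)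
    finally show ?thesis using aY1 by (simp add: of_nat_diff)
  qed
  have S1: "real (\<Sum>P1\<in>A1. card ((P2 - Y1) \<inter> P1)) \<le> (real n - real a) * real (card A1) / r"
    if P2: "P2 \<in> A2" for P2
  proof -
    have finP2: "finite P2" using P2 A1S finP by auto
    have "real (\<Sum>P1\<in>A1. card ((P2 - Y1) \<inter> P1)) \<le> real (card (P2 - Y1)) * real (card A1) / r"
      unfolding A1_def using sp(1) r fin1 finP2 by (intro spread_sum) (auto simp: A1_def)
    also have "real (card (P2 - Y1)) \<le> real n - real a"
    proof -
      have "card (P2 - Y1) = card P2 - card (P2 \<inter> Y1)" using finP2 by (simp add: card_Diff_subset_Int Diff_Int2)
      moreover have "a \<le> card (P2 \<inter> Y1)" unfolding a_def using memY2[OF P2] finP2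
        by (intro card_mono) auto
      moreover have "card (P2 \<inter> Y1) \<le> card P2" using finP2 by (intro card_mono) auto
      ultimately show ?thesis using cardP P2 A1S by auto
    qed
    then have "real (card (P2 - Y1)) * real (card A1) / r \<le> (real n - real a) * real (card A1) / r"
      using r by (intro divide_right_mono mult_right_mono) auto
    finally show ?thesis .
  qed
  define c1 where "c1 = real (card A1)"
  define c2 where "c2 = real (card A2)"
  have c1p: "0 < c1" and c2p: "0 < c2" unfolding c1_def c2_def using ne1 ne2 fin1 fin2 by (auto simp: card_gt_0_iff)
  have "real t * c1 * c2 = (\<Sum>P1\<in>A1. \<Sum>P2\<in>A2. real t)" unfolding c1_def c2_def by simp
  also have "\<dots> \<le> (\<Sum>P1\<in>A1. \<Sum>P2\<in>A2. real a + real (card ((Y1 - Y2) \<inter> P2)) + real (card ((P2 - Y1) \<inter> P1)))"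
    using pair by (intro sum_mono) auto
  also have "\<dots> = real a * c1 * c2 + c1 * real (\<Sum>P2\<in>A2. card ((Y1 - Y2) \<inter> P2))
                  + (\<Sum>P2\<in>A2. real (\<Sum>P1\<in>A1. card ((P2 - Y1) \<inter> P1)))"
    unfolding c1_def c2_def by (simp add: sum.distrib sum.swap[of _ A1 A2] sum_distrib_left algebra_simps)
  also have "\<dots> \<le> real a * c1 * c2 + c1 * ((real (card Y1) - real a) * c2 / r)
                  + (\<Sum>P2\<in>A2. (real n - real a) * c1 / r)"
    using S1 S2 c1p unfolding c1_def c2_def by (intro add_mono mult_left_mono sum_mono) auto
  also have "\<dots> = c1 * c2 * (real a + (real (card Y1) - real a + real n - real a) / r)"
    unfolding c2_def using r by (simp add: field_simps)
  finally have "real t * (c1 * c2) \<le> (real a + (real (card Y1) - real a + real n - real a) / r) * (c1 * c2)"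
    by (simp add: algebra_simps)
  then show ?thesis unfolding a_def using c1p c2p by (simp add: mult_le_cancel_right_pos)
qed



definition Aprop :: "nat \<Rightarrow> nat \<Rightarrow> real \<Rightarrow> real \<Rightarrow> bool" where
  "Aprop n t k c \<longleftrightarrow> (\<forall>\<F>. \<F> \<subseteq> Sigma_n n \<longrightarrow> s_intersecting t \<F> \<longrightarrow>
     (\<exists>\<S>. (\<forall>A\<in>\<S>. partial_perm n A) \<and> (\<forall>A\<in>\<S>. real (card A) \<le> real t + k) \<and>
          real (card (\<F> - fam_contain_any \<F> \<S>)) < c \<and>
          s_intersecting (t - nat \<lfloor>sqrt (real n)\<rfloor>) \<S>))"

lemma stepB:
  assumes AP: "Aprop n t k c" and FS: "\<F> \<subseteq> Sigma_n n" and Ft: "s_intersecting t \<F>"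
    and Fc: "2 * c \<le> real (card \<F>)" and c0: "0 < c" and qt: "nat \<lfloor>sqrt (real n)\<rfloor> \<le> t"
    and \<beta>: "0 < \<beta>"
    and NB: "\<And>m d. real m \<le> real n \<Longrightarrow> real d \<le> real (nat \<lfloor>sqrt (real n)\<rfloor>) + k \<Longrightarrow>
               2 * real (m choose d) \<le> \<beta>"
  shows "\<exists>X. X \<subseteq> {1..n} \<times> {1..n} \<and> card X = t - nat \<lfloor>sqrt (real n)\<rfloor> \<and>
             real (card (fam_contain \<F> X)) \<ge> real (card \<F>) / \<beta>"
proof -
  define q where "q = nat \<lfloor>sqrt (real n)\<rfloor>"
  define s where "s = t - q"
  obtain \<S> where S1: "\<forall>A\<in>\<S>. partial_perm n A" and S2: "\<forall>A\<in>\<S>. real (card A) \<le> real t + k"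
    and S3: "real (card (\<F> - fam_contain_any \<F> \<S>)) < c" and S4: "s_intersecting s \<S>"
    using AP FS Ft unfolding Aprop_def s_def q_def by blast
  define G where "G = fam_contain_any \<F> \<S>"
  have finF: "finite \<F>" using FS finite_fam by blast
  have GF: "G \<subseteq> \<F>" unfolding G_def fam_contain_any_def fam_contain_def by auto
  have finG: "finite G" using GF finF finite_subset by blast
  have cF: "card \<F> = card G + card (\<F> - G)" using GF finF
    by (simp add: card_Diff_subset finite_subset card_mono)
  have Gbig: "real (card \<F>) / 2 < real (card G)" using cF S3 Fc unfolding G_def by simp
  then have "G \<noteq> {}" using c0 Fc by auto
  then obtain P0 A where P0: "P0 \<in> \<F>" "A \<in> \<S>" "A \<subseteq> P0"
    unfolding G_def fam_contain_any_def fam_contain_def by auto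
  have P0S: "P0 \<in> Sigma_n n" using P0 FS by blast
  have cP0: "card P0 = n" using Sigma_n_card[OF P0S] .
  have P0sub: "P0 \<subseteq> {1..n} \<times> {1..n}" using Sigma_n_sub[OF P0S] .
  have finP0: "finite P0" using P0sub by (rule finite_subset) simp
  have finA: "finite A" using P0(3) finP0 by (rule finite_subset)
  have As: "s \<le> card A" using S4 P0(2) unfolding s_intersecting_def by fastforce
  have An: "card A \<le> n" using card_mono[OF finP0 P0(3)] cP0 by simp
  define \<X> where "\<X> = {X. X \<subseteq> A \<and> card X = s}"
  have finX: "finite \<X>" unfolding \<X>_def using finA by simp
  have cX: "card \<X> = card A choose (card A - s)"
    unfolding \<X>_def using n_subsets[OF finA, of s] binomial_symmetric[OF As] by simp
  have dle: "real (card A - s) \<le> real q + k" using S2 P0(2) As qt unfolding s_def q_def by auto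
  have cXb: "2 * real (card \<X>) \<le> \<beta>" unfolding cX using NB[OF _ dle[unfolded q_def]] An by simp
  have cover: "\<exists>X\<in>\<X>. X \<subseteq> P" if "P \<in> G" for P
  proof -
    have "P \<in> fam_contain_any \<F> \<S>" using that G_def by simp
    then obtain B where B: "B \<in> \<S>" "B \<subseteq> P" by (auto simp: fam_contain_any_def fam_contain_def)
    have "s \<le> card (A \<inter> B)" using S4 B(1) P0(2) unfolding s_intersecting_def by blast
    then obtain X where "X \<subseteq> A \<inter> B" "card X = s" using obtain_subset_with_card_n by metis
    then show ?thesis using B unfolding \<X>_def by auto
  qed
  show ?thesis
  proof (rule ccontr)
    assume neg: "\<not> ?thesis"
    have small: "real (card (fam_contain \<F> X)) < real (card \<F>) / \<beta>" if "X \<in> \<X>" for X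
    proof -
      have "X \<subseteq> {1..n} \<times> {1..n}" "card X = t - q" using that P0 P0sub unfolding \<X>_def s_def by auto
      then show ?thesis using neg unfolding q_def by force
    qed
    have "real (card G) = (\<Sum>P\<in>G. 1)" by simp
    also have "\<dots> \<le> (\<Sum>P\<in>G. real (card {X\<in>\<X>. X \<subseteq> P}))"
    proof (intro sum_mono)
      fix P assume "P \<in> G"
      then obtain X where "X \<in> \<X>" "X \<subseteq> P" using cover by blast
      then have "{X\<in>\<X>. X \<subseteq> P} \<noteq> {}" by auto
      then show "1 \<le> real (card {X\<in>\<X>. X \<subseteq> P})" using finX
        by (simp add: Suc_leI card_gt_0_iff)
    qed
    also have "\<dots> = real (\<Sum>X\<in>\<X>. card {P\<in>G. X \<subseteq> P})"
      using double_count[OF finX finG, of "\<lambda>X P. X \<subseteq> P"] by simp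
    also have "\<dots> \<le> (\<Sum>X\<in>\<X>. real (card \<F>) / \<beta>)"
      unfolding of_nat_sum
    proof (intro sum_mono)
      fix X assume X: "X \<in> \<X>"
      have "{P\<in>G. X \<subseteq> P} \<subseteq> fam_contain \<F> X" using GF unfolding fam_contain_def by auto
      then have "card {P\<in>G. X \<subseteq> P} \<le> card (fam_contain \<F> X)"
        using finF by (intro card_mono) (auto simp: fam_contain_def)
      then show "real (card {P\<in>G. X \<subseteq> P}) \<le> real (card \<F>) / \<beta>" using small[OF X] by linarith
    qed
    also have "\<dots> = real (card \<X>) * (real (card \<F>) / \<beta>)" by simp
    also have "\<dots> \<le> (\<beta> / 2) * (real (card \<F>) / \<beta>)"
      using cXb by (intro mult_right_mono) auto
    also have "\<dots> = real (card \<F>) / 2" using \<beta> by simp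
    finally show False using Gbig by linarith
  qed
qed

lemma s_intersecting_mono: "s_intersecting t \<F> \<Longrightarrow> G \<subseteq> \<F> \<Longrightarrow> s_intersecting t G"
  unfolding s_intersecting_def by blast

lemma stepA:
  fixes r \<beta>' c' k' :: real
  assumes BP: "\<And>G. G \<subseteq> Sigma_n n \<Longrightarrow> s_intersecting t G \<Longrightarrow> c' \<le> real (card G) \<Longrightarrow>
          \<exists>X. X \<subseteq> {1..n} \<times> {1..n} \<and> card X = t - nat \<lfloor>sqrt (real n)\<rfloor> \<and>
              real (card (fam_contain G X)) \<ge> real (card G) / \<beta>'"
    and c0: "0 < c'" and b0: "0 < \<beta>'" and r0: "0 < r"
    and N1: "\<And>l. l \<le> n \<Longrightarrow> real t + k' < real l \<Longrightarrow>
               r ^ l * fact (n - l) * \<beta>' < r ^ (t - nat \<lfloor>sqrt (real n)\<rfloor>) * c'"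
    and N2: "\<And>a y1. a < t - nat \<lfloor>sqrt (real n)\<rfloor> \<Longrightarrow> real y1 \<le> real t + k' \<Longrightarrow> a \<le> y1 \<Longrightarrow>
               real a + (real y1 - real a + real n - real a) / r < real t"
  shows "Aprop n t k' c'"
  unfolding Aprop_def
proof (intro allI impI)
  fix \<F> assume FS: "\<F> \<subseteq> Sigma_n n" and Ft: "s_intersecting t \<F>"
  define s where "s = t - nat \<lfloor>sqrt (real n)\<rfloor>"
  define good where "good Y \<longleftrightarrow> partial_perm n Y \<and> real (card Y) \<le> real t + k' \<and>
      (\<exists>H. H \<subseteq> \<F> \<and> fam_contain H Y \<noteq> {} \<and> spread r H Y)" for Y
  have finF: "finite \<F>" using FS finite_fam by blast
  have claim: "\<exists>\<S>. (\<forall>Y\<in>\<S>. good Y) \<and> real (card (G - fam_contain_any G \<S>)) < c'"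
    if "G \<subseteq> \<F>" for G
    using that
  proof (induction "card G" arbitrary: G rule: less_induct)
    case less
    have GS: "G \<subseteq> Sigma_n n" using less.prems FS by blast
    have finG: "finite G" using GS finite_fam by blast
    show ?case
    proof (cases "real (card G) < c'")
      case True
      then show ?thesis by (intro exI[of _ "{}"]) (simp add: fam_contain_any_def)
    next
      case False
      then have cG: "c' \<le> real (card G)" by simp
      have Gt: "s_intersecting t G" using Ft less.prems by (rule s_intersecting_mono)
      obtain X where X: "X \<subseteq> {1..n} \<times> {1..n}" "card X = s"
          "real (card (fam_contain G X)) \<ge> real (card G) / \<beta>'"
        using BP[OF GS Gt cG] unfolding s_def by blast
      define \<Y> where "\<Y> = Pow ({1..n} \<times> {1..n})"
      define g where "g Y = real (card (fam_contain G Y)) * r ^ (card Y)" for Y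
      have finY: "finite \<Y>" unfolding \<Y>_def by simp
      have XY: "X \<in> \<Y>" using X unfolding \<Y>_def by simp
      define m where "m = Max (g ` \<Y>)"
      have "m \<in> g ` \<Y>" unfolding m_def using finY XY by (intro Max_in) auto
      then obtain Y where YY: "Y \<in> \<Y>" and gY: "g Y = m" by auto
      have gmax: "g Y' \<le> g Y" if "Y' \<in> \<Y>" for Y'
        unfolding gY m_def using finY that by (intro Max_ge) auto
      have gX: "c' / \<beta>' * r ^ s \<le> g X"
      proof -
        have "c' / \<beta>' \<le> real (card G) / \<beta>'" using cG b0 by (intro divide_right_mono) auto
        also have "\<dots> \<le> real (card (fam_contain G X))" using X(3) .
        finally show ?thesis unfolding g_def X(2) using r0 by (intro mult_right_mono) auto
      qed
      have gXp: "0 < c' / \<beta>' * r ^ s" using c0 b0 r0 by simp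
      have gYX: "c' / \<beta>' * r ^ s \<le> g Y" using gX gmax[OF XY] by linarith
      have "0 < g Y" using gYX gXp by linarith
      then have "card (fam_contain G Y) \<noteq> 0" unfolding g_def by (auto simp: zero_less_mult_iff)
      then have neY: "fam_contain G Y \<noteq> {}" by auto
      then obtain P where P: "P \<in> G" "Y \<subseteq> P" unfolding fam_contain_def by auto
      have PS: "P \<in> Sigma_n n" using P GS by blast
      have pp: "partial_perm n Y" unfolding partial_perm_def using PS P by blast
      have finP: "finite P" using Sigma_n_sub[OF PS] by (rule finite_subset) simp
      have finYY: "finite Y" using P(2) finP by (rule finite_subset)
      have Yn: "card Y \<le> n" using card_mono[OF finP P(2)] Sigma_n_card[OF PS] by simp
      have size: "real (card Y) \<le> real t + k'"
      proof (rule ccontr)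
        assume "\<not> ?thesis"
        then have lt: "real t + k' < real (card Y)" by simp
        have cc: "real (card (fam_contain G Y)) \<le> fact (n - card Y)"
          using card_contain_le[OF GS, of Y] by (metis of_nat_fact of_nat_le_iff)
        have "g Y \<le> fact (n - card Y) * r ^ card Y"
          unfolding g_def using cc r0 by (intro mult_right_mono) auto
        then have "c' / \<beta>' * r ^ s \<le> fact (n - card Y) * r ^ card Y" using gYX by linarith
        then have "c' / \<beta>' * r ^ s * \<beta>' \<le> fact (n - card Y) * r ^ card Y * \<beta>'"
          using b0 by (intro mult_right_mono) auto
        moreover have "c' / \<beta>' * r ^ s * \<beta>' = r ^ s * c'" using b0 by simp
        ultimately have "r ^ s * c' \<le> r ^ card Y * fact (n - card Y) * \<beta>'" by (simp add: mult.commute)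
        then show False using N1[OF Yn lt] unfolding s_def by linarith
      qed
      have spY: "spread r G Y"
        unfolding spread_def
      proof (intro allI impI)
        fix z assume zY: "z \<notin> Y"
        show "real (card (fam_contain G (insert z Y))) * r \<le> real (card (fam_contain G Y))"
        proof (cases "z \<in> {1..n} \<times> {1..n}")
          case True
          then have "insert z Y \<in> \<Y>" using YY unfolding \<Y>_def by auto
          then have "g (insert z Y) \<le> g Y" by (rule gmax)
          then have "real (card (fam_contain G (insert z Y))) * r * r ^ card Y
                       \<le> real (card (fam_contain G Y)) * r ^ card Y"
            unfolding g_def using finYY zY by (simp add: algebra_simps)
          then show ?thesis using r0 by simp
        next
          case False
          have "fam_contain G (insert z Y) = {}"
          proof -
            have "z \<notin> Q" if "Q \<in> G" for Q
            proof -
              have "Q \<in> Sigma_n n" using that GS by (rule subsetD[rotated])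
              then have "Q \<subseteq> {1..n} \<times> {1..n}" by (rule Sigma_n_sub)
              then show ?thesis using False by blast
            qed
            then show ?thesis unfolding fam_contain_def by auto
          qed
          then show ?thesis by simp
        qed
      qed
      have goodY: "good Y" unfolding good_def using pp size spY neY less.prems by blast
      define G' where "G' = G - fam_contain G Y"
      have G'sub: "G' \<subseteq> \<F>" using less.prems unfolding G'_def by blast
      have "fam_contain G Y \<subseteq> G" unfolding fam_contain_def by auto
      then have "G' \<subset> G" unfolding G'_def using neY by blast
      then have "card G' < card G" using finG by (rule psubset_card_mono[rotated])
      then obtain \<S>' where S': "\<forall>Y\<in>\<S>'. good Y" "real (card (G' - fam_contain_any G' \<S>')) < c'"
        using less.hyps[OF _ G'sub] by blast
      have sub: "G - fam_contain_any G (insert Y \<S>') \<subseteq> G' - fam_contain_any G' \<S>'"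
        unfolding G'_def fam_contain_any_def fam_contain_def by auto
      have "card (G - fam_contain_any G (insert Y \<S>')) \<le> card (G' - fam_contain_any G' \<S>')"
        using sub finG unfolding G'_def by (intro card_mono) auto
      then show ?thesis using S' goodY by (intro exI[of _ "insert Y \<S>'"]) auto
    qed
  qed
  obtain \<S> where S: "\<forall>Y\<in>\<S>. good Y" "real (card (\<F> - fam_contain_any \<F> \<S>)) < c'"
    using claim[of \<F>] by blast
  have inter: "s_intersecting s \<S>"
    unfolding s_intersecting_def
  proof (intro ballI)
    fix Y1 Y2 assume Y: "Y1 \<in> \<S>" "Y2 \<in> \<S>"
    obtain H1 where H1: "H1 \<subseteq> \<F>" "fam_contain H1 Y1 \<noteq> {}" "spread r H1 Y1" using S(1) Y(1) good_def by blast
    obtain H2 where H2: "H2 \<subseteq> \<F>" "fam_contain H2 Y2 \<noteq> {}" "spread r H2 Y2" using S(1) Y(2) good_def by blast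
    have st: "real t \<le> real (card (Y1 \<inter> Y2)) +
           (real (card Y1) - real (card (Y1 \<inter> Y2)) + real n - real (card (Y1 \<inter> Y2))) / r"
      using spread_inter[OF FS Ft H1(1) H2(1) H1(2) H2(2) H1(3) H2(3) r0] .
    have y1: "real (card Y1) \<le> real t + k'" using S(1) Y(1) good_def by blast
    obtain P where "P \<in> H1" "Y1 \<subseteq> P" using H1(2) unfolding fam_contain_def by auto
    then have "P \<in> Sigma_n n" using H1(1) FS by blast
    then have "finite P" by (rule finite_subset[OF Sigma_n_sub]) simp
    then have finY1: "finite Y1" using \<open>Y1 \<subseteq> P\<close> finite_subset by blast
    have aY: "card (Y1 \<inter> Y2) \<le> card Y1" using finY1 by (intro card_mono) auto
    show "s \<le> card (Y1 \<inter> Y2)"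
    proof (rule ccontr)
      assume "\<not> s \<le> card (Y1 \<inter> Y2)"
      then have "card (Y1 \<inter> Y2) < t - nat \<lfloor>sqrt (real n)\<rfloor>" unfolding s_def by simp
      from N2[OF this y1 aY] st show False by linarith
    qed
  qed
  show "\<exists>\<S>. (\<forall>A\<in>\<S>. partial_perm n A) \<and> (\<forall>A\<in>\<S>. real (card A) \<le> real t + k') \<and>
          real (card (\<F> - fam_contain_any \<F> \<S>)) < c' \<and> s_intersecting (t - nat \<lfloor>sqrt (real n)\<rfloor>) \<S>"
    using S inter unfolding good_def s_def by blast
qed



lemma eventually_conds:
  fixes \<delta> M :: real assumes d: "0 < \<delta>" "\<delta> < 1/2" and M: "0 < M"
  shows "\<exists>n0::nat. \<forall>n\<ge>n0.
     (ln 2 + 1 + real n powr (-2*\<delta>) * ln (real n) / 2 \<le> \<delta>/2 * ln (real n)) \<and>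
     (sqrt (real n) + M < \<delta>/2 * real n powr (1/2 + 2*\<delta>)) \<and>
     (60 * exp 1 \<le> real n powr (\<delta>/2)) \<and> 1 < real n"
proof -
  have e1: "eventually (\<lambda>n::nat. ln 2 + 1 + real n powr (-2*\<delta>) * ln (real n) / 2 \<le> \<delta>/2 * ln (real n)) at_top"
    using d M by real_asymp
  have e2: "eventually (\<lambda>n::nat. sqrt (real n) + M < \<delta>/2 * real n powr (1/2 + 2*\<delta>)) at_top"
    using d M by real_asymp
  have e3: "eventually (\<lambda>n::nat. 60 * exp 1 \<le> real n powr (\<delta>/2)) at_top"
    using d M by real_asymp
  have e4: "eventually (\<lambda>n::nat. 1 < real n) at_top" by real_asymp
  have "eventually (\<lambda>n::nat. (ln 2 + 1 + real n powr (-2*\<delta>) * ln (real n) / 2 \<le> \<delta>/2 * ln (real n)) \<and>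
     (sqrt (real n) + M < \<delta>/2 * real n powr (1/2 + 2*\<delta>)) \<and>
     (60 * exp 1 \<le> real n powr (\<delta>/2)) \<and> 1 < real n) at_top"
    using e1 e2 e3 e4 by (intro eventually_conj)
  then show ?thesis unfolding eventually_at_top_linorder by blast
qed

theorem lemma3p2:
  fixes \<delta> M :: real
  assumes "0 < \<delta>" "\<delta> < 1/2" "0 < M"
  shows "\<exists>n0::nat. \<forall>n t :: nat. n > n0 \<longrightarrow>
           real n powr 0.99 < real t \<longrightarrow> real t < real n - real n powr (1/2 + 2*\<delta>) \<longrightarrow>
           (\<forall>i::nat. (1-\<delta>)^i * real (n - t) > real n powr (1/2 + 2*\<delta>) \<longrightarrow>
             ((\<forall>\<F>. \<F> \<subseteq> Sigma_n n \<longrightarrow> s_intersecting t \<F> \<longrightarrow>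
                 (\<exists>\<S>. (\<forall>A\<in>\<S>. partial_perm n A) \<and>
                       (\<forall>A\<in>\<S>. real (card A) \<le> real t + (1-\<delta>)^i * real (n - t)) \<and>
                       real (card (\<F> - fam_contain_any \<F> \<S>)) < 2^i / real n powr M * fact (n - t) \<and>
                       s_intersecting (t - nat \<lfloor>sqrt (real n)\<rfloor>) \<S>))
              \<and>
              (\<forall>\<F>. \<F> \<subseteq> Sigma_n n \<longrightarrow> s_intersecting t \<F> \<longrightarrow>
                 real (card \<F>) \<ge> 2^(i+1) / real n powr M * fact (n - t) \<longrightarrow>
                 (\<exists>X. X \<subseteq> {1..n} \<times> {1..n} \<and> card X = t - nat \<lfloor>sqrt (real n)\<rfloor> \<and>
                      real (card (fam_link \<F> X)) \<ge>
                        (10 * real n powr (1/2 - \<delta>)) powr (- ((1-\<delta>)^(i+1) * real (n - t)))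
                          * real (card \<F>)))))"
proof -
  obtain n0 :: nat where n0: "\<forall>n\<ge>n0.
     (ln 2 + 1 + real n powr (-2*\<delta>) * ln (real n) / 2 \<le> \<delta>/2 * ln (real n)) \<and>
     (sqrt (real n) + M < \<delta>/2 * real n powr (1/2 + 2*\<delta>)) \<and>
     (60 * exp 1 \<le> real n powr (\<delta>/2)) \<and> 1 < real n"
    using eventually_conds[OF assms] by blast
  have d0: "0 < \<delta>" "\<delta> < 1/2" using assms by auto
  show ?thesis
  proof (intro exI[of _ n0] allI impI)
    fix n t i :: nat
    assume nn0: "n > n0" and ht1: "real n powr 0.99 < real t"
      and ht2: "real t < real n - real n powr (1/2 + 2*\<delta>)"
      and hi: "(1-\<delta>)^i * real (n - t) > real n powr (1/2 + 2*\<delta>)"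
    define N where "N = real n"
    define u where "u = n - t"
    define q where "q = nat \<lfloor>sqrt (real n)\<rfloor>"
    define \<rho> where "\<rho> = 10 * N powr (1/2 - \<delta>)"
    define L where "L = exp 1 * \<rho> * N powr (\<delta>/2)"
    define r where "r = real u / L"
    have E: "ln 2 + 1 + N powr (-2*\<delta>) * ln N / 2 \<le> \<delta>/2 * ln N"
       "sqrt N + M < \<delta>/2 * N powr (1/2 + 2*\<delta>)" "60 * exp 1 \<le> N powr (\<delta>/2)" and N1: "1 < N"
      using n0 nn0 unfolding N_def by auto
    have Np: "0 < N" using N1 by simp
    have ht1': "N powr 0.99 < real t" using ht1 N_def by simp
    have ht2': "real t < N - N powr (1/2 + 2*\<delta>)" using ht2 N_def by simp
    have sq: "sqrt N = N powr (1/2)" using Np by (simp add: powr_half_sqrt)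
    have sq1: "sqrt N \<le> N powr 0.99" unfolding sq using N1 by (intro powr_mono) auto
    have sq2: "sqrt N \<le> N powr (1/2 + 2*\<delta>)" unfolding sq using N1 d0 by (intro powr_mono) auto
    have qeq: "real q = of_int \<lfloor>sqrt N\<rfloor>" unfolding q_def N_def by simp
    have qN: "real q \<le> sqrt N" unfolding qeq by simp
    have qN2: "sqrt N < real q + 1" unfolding qeq by linarith
    have "real q < real t" using qN sq1 ht1' by linarith
    then have qt: "q \<le> t" by simp
    have pge: "0 \<le> N powr (1/2 + 2*\<delta>)" by simp
    have "real t < real n" using ht2' pge N_def by linarith
    then have tn: "t < n" by simp
    have ru: "real u = N - real t" unfolding u_def N_def using tn by simp
    have u1: "1 \<le> u" unfolding u_def using tn by simp
    have ul: "N powr (1/2 + 2*\<delta>) < real u" using ht2' ru by simp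
    have sNu: "sqrt N \<le> real u" using sq2 ul by simp
    have uN: "real u \<le> N" using ru by simp
    have nn: "n = t + u" unfolding u_def using tn by simp
    have \<rho>p: "0 < \<rho>" unfolding \<rho>_def using Np by simp
    have Lp: "0 < L" unfolding L_def using \<rho>p Np by simp
    have r0: "0 < r" unfolding r_def using Lp u1 by simp
    have cpos: "0 < 2 ^ j / N powr M * fact u" for j :: nat using Np by simp
    have NB: "2 * real (m choose d) \<le> \<rho> powr ((1-\<delta>) * ((1-\<delta>)^j * real u))"
      if "real m \<le> real n" "real d \<le> real q + (1-\<delta>)^j * real u"
         "N powr (1/2 + 2*\<delta>) < (1-\<delta>)^j * real u" for m d j
    proof -
      have "(1-\<delta>)^j \<le> 1" using d0 by (intro power_le_one) auto
      then have "(1-\<delta>)^j * real u \<le> real u" using d0 by (intro mult_left_le_one_le) auto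
      then have kN: "(1-\<delta>)^j * real u \<le> N" using uN by linarith
      show ?thesis unfolding \<rho>_def
        using numB[of N \<delta> "(1-\<delta>)^j * real u" m d "real q"] N1 d0 that kN qN E(1)
        unfolding N_def by auto
    qed
    have claim: "Aprop n t ((1-\<delta>)^j * real u) (2^j / N powr M * fact u)"
      if "N powr (1/2 + 2*\<delta>) < (1-\<delta>)^j * real u" for j
      using that
    proof (induction j)
      case 0
      show ?case unfolding Aprop_def
      proof (intro allI impI)
        fix \<F> assume FS: "\<F> \<subseteq> Sigma_n n" and Ft: "s_intersecting t \<F>"
        have a1: "\<forall>A\<in>\<F>. partial_perm n A" unfolding partial_perm_def using FS by blast
        have a2: "\<forall>A\<in>\<F>. real (card A) \<le> real t + (1 - \<delta>) ^ 0 * real u"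
          using FS Sigma_n_card ru unfolding N_def by auto
        have e: "\<F> - fam_contain_any \<F> \<F> = {}" unfolding fam_contain_any_def fam_contain_def by auto
        have a3: "real (card (\<F> - fam_contain_any \<F> \<F>)) < 2 ^ 0 / N powr M * fact u"
          using cpos[of 0] unfolding e by simp
        have a4: "s_intersecting (t - nat \<lfloor>sqrt (real n)\<rfloor>) \<F>"
          using Ft unfolding s_intersecting_def by (meson diff_le_self le_trans)
        show "\<exists>\<S>. (\<forall>A\<in>\<S>. partial_perm n A) \<and> (\<forall>A\<in>\<S>. real (card A) \<le> real t + (1 - \<delta>) ^ 0 * real u) \<and>
          real (card (\<F> - fam_contain_any \<F> \<S>)) < 2 ^ 0 / N powr M * fact u \<and>
          s_intersecting (t - nat \<lfloor>sqrt (real n)\<rfloor>) \<S>"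
          using a1 a2 a3 a4 by blast
      qed
    next
      case (Suc j)
      define k where "k = (1-\<delta>)^j * real u"
      define k' where "k' = (1-\<delta>)^(Suc j) * real u"
      define c where "c = 2^j / N powr M * fact u"
      define c' where "c' = 2^(Suc j) / N powr M * fact u"
      have kk: "k' = (1-\<delta>) * k" unfolding k_def k'_def by simp
      have k0: "0 \<le> k" unfolding k_def using d0 by simp
      have k'k: "k' \<le> k" unfolding kk using k0 d0 by (intro mult_left_le_one_le) auto
      have ck: "N powr (1/2 + 2*\<delta>) < k'" using Suc.prems unfolding k'_def .
      then have cj: "N powr (1/2 + 2*\<delta>) < k" using k'k by linarith
      have AP: "Aprop n t k c" using Suc.IH cj unfolding k_def c_def by blast
      have cc: "c' = 2 * c" unfolding c_def c'_def by simp
      have c0: "0 < c" unfolding c_def using cpos .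
      have ku: "k \<le> real u"
      proof -
        have "(1-\<delta>)^j \<le> 1" using d0 by (intro power_le_one) auto
        then show ?thesis unfolding k_def using d0 by (intro mult_left_le_one_le) auto
      qed
      have BP: "\<exists>X. X \<subseteq> {1..n} \<times> {1..n} \<and> card X = t - nat \<lfloor>sqrt (real n)\<rfloor> \<and>
              real (card (fam_contain G X)) \<ge> real (card G) / \<rho> powr k'"
        if GS: "G \<subseteq> Sigma_n n" and Gt: "s_intersecting t G" and Gc: "c' \<le> real (card G)" for G
      proof -
        have NB': "2 * real (m choose d) \<le> \<rho> powr k'"
          if "real m \<le> real n" "real d \<le> real (nat \<lfloor>sqrt (real n)\<rfloor>) + k" for m d
          using NB[of m d j] that cj unfolding kk k_def q_def by simp
        show ?thesis
          using stepB[OF AP GS Gt _ c0 qt[unfolded q_def] _ NB'] Gc cc \<rho>p by simp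
      qed
      have N1': "r ^ l * fact (n - l) * \<rho> powr k' < r ^ (t - nat \<lfloor>sqrt (real n)\<rfloor>) * c'"
        if l: "l \<le> n" "real t + k' < real l" for l
      proof -
        define m where "m = l - t"
        have k'0: "0 \<le> k'" using ck pge by linarith
        have lt: "t < l" using l k'0 by linarith
        have mk: "k' < real m" unfolding m_def using l lt by simp
        have mu: "m \<le> u" unfolding m_def u_def using l by simp
        have key: "r ^ (m + q) * fact (u - m) * \<rho> powr k' * N powr M < fact u"
          using num1[of N \<delta> k' m u q M] N1 d0 ck mk mu uN u1 qN E(2)
          unfolding r_def L_def \<rho>_def by simp
        have e1: "r ^ l = r ^ (t - q) * r ^ (m + q)"
        proof -
          have "l = (t - q) + (m + q)" unfolding m_def using lt qt by simp
          then show ?thesis by (metis power_add)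
        qed
        have e2: "n - l = u - m" unfolding m_def u_def using lt l by simp
        have NMp: "0 < N powr M" using Np by simp
        have "r ^ (m + q) * fact (u - m) * \<rho> powr k' < fact u / N powr M"
          using key NMp by (simp add: less_divide_eq)
        also have "\<dots> \<le> c'"
        proof -
          have "(1::real) \<le> 2 ^ Suc j" using one_le_power[of "2::real" "Suc j"] by simp
          then have "1 * (fact u / N powr M) \<le> 2 ^ Suc j * (fact u / N powr M)"
            using NMp by (intro mult_right_mono) auto
          then show ?thesis unfolding c'_def by simp
        qed
        finally have "r ^ (t - q) * (r ^ (m + q) * fact (u - m) * \<rho> powr k') < r ^ (t - q) * c'"
          using r0 by simp
        then show ?thesis unfolding e1 e2 q_def[symmetric] by (simp add: mult.assoc)
      qed
      have N2': "real a + (real y1 - real a + real n - real a) / r < real t"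
        if "a < t - nat \<lfloor>sqrt (real n)\<rfloor>" "real y1 \<le> real t + k'" "a \<le> y1" for a y1
      proof -
        have aq: "a < t - q" using that(1) q_def by simp
        have k'u: "k' \<le> real u" using k'k ku by linarith
        have "real a + (real y1 - real a + real n - real a) /
           (real u / (exp 1 * (10 * N powr (1/2-\<delta>)) * N powr (\<delta>/2))) < real t"
          by (rule num2[OF less_imp_le[OF N1] d0 aq qt that(2) k'u nn qN qN2 sNu u1 E(3)])
        then show ?thesis unfolding r_def L_def \<rho>_def .
      qed
      have c'0: "0 < c'" using c0 cc by simp
      have b'0: "0 < \<rho> powr k'" using \<rho>p by simp
      have "Aprop n t k' c'" by (rule stepA[OF BP c'0 b'0 r0 N1' N2'])
      then show ?case unfolding k'_def c'_def .
    qed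
    have APi: "Aprop n t ((1-\<delta>)^i * real u) (2^i / N powr M * fact u)"
      using claim hi unfolding N_def u_def by blast
    show "(\<forall>\<F>. \<F> \<subseteq> Sigma_n n \<longrightarrow> s_intersecting t \<F> \<longrightarrow>
                 (\<exists>\<S>. (\<forall>A\<in>\<S>. partial_perm n A) \<and>
                       (\<forall>A\<in>\<S>. real (card A) \<le> real t + (1-\<delta>)^i * real (n - t)) \<and>
                       real (card (\<F> - fam_contain_any \<F> \<S>)) < 2^i / real n powr M * fact (n - t) \<and>
                       s_intersecting (t - nat \<lfloor>sqrt (real n)\<rfloor>) \<S>))
              \<and>
              (\<forall>\<F>. \<F> \<subseteq> Sigma_n n \<longrightarrow> s_intersecting t \<F> \<longrightarrow>
                 real (card \<F>) \<ge> 2^(i+1) / real n powr M * fact (n - t) \<longrightarrow>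
                 (\<exists>X. X \<subseteq> {1..n} \<times> {1..n} \<and> card X = t - nat \<lfloor>sqrt (real n)\<rfloor> \<and>
                      real (card (fam_link \<F> X)) \<ge>
                        (10 * real n powr (1/2 - \<delta>)) powr (- ((1-\<delta>)^(i+1) * real (n - t)))
                          * real (card \<F>)))"
    proof (intro conjI allI impI)
      fix \<F> assume FS: "\<F> \<subseteq> Sigma_n n" and Ft: "s_intersecting t \<F>"
      have APi': "Aprop n t ((1-\<delta>)^i * real (n - t)) (2^i / real n powr M * fact (n - t))"
        using APi by (simp add: N_def u_def)
      show "\<exists>\<S>. (\<forall>A\<in>\<S>. partial_perm n A) \<and>
                       (\<forall>A\<in>\<S>. real (card A) \<le> real t + (1-\<delta>)^i * real (n - t)) \<and>
                       real (card (\<F> - fam_contain_any \<F> \<S>)) < 2^i / real n powr M * fact (n - t) \<and>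
                       s_intersecting (t - nat \<lfloor>sqrt (real n)\<rfloor>) \<S>"
        using APi'[unfolded Aprop_def, rule_format, OF FS Ft] .
    next
      fix \<F> assume FS: "\<F> \<subseteq> Sigma_n n" and Ft: "s_intersecting t \<F>"
        and Fc: "real (card \<F>) \<ge> 2^(i+1) / real n powr M * fact (n - t)"
      define x where "x = (1-\<delta>)^(i+1) * real (n - t)"
      have xe: "x = (1-\<delta>) * ((1-\<delta>)^i * real u)" unfolding x_def u_def by simp
      have Fc': "2 * (2^i / N powr M * fact u) \<le> real (card \<F>)" using Fc by (simp add: N_def u_def)
      have hi': "N powr (1/2 + 2*\<delta>) < (1-\<delta>)^i * real u" using hi by (simp add: N_def u_def)
      have NB': "2 * real (m choose d) \<le> \<rho> powr x"
        if "real m \<le> real n" "real d \<le> real (nat \<lfloor>sqrt (real n)\<rfloor>) + (1-\<delta>)^i * real u" for m d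
      proof -
        have "real d \<le> real q + (1-\<delta>)^i * real u" using that(2) q_def by simp
        from NB[OF that(1) this hi'] show ?thesis unfolding xe .
      qed
      have xp: "0 < \<rho> powr x" using \<rho>p by simp
      have exX: "\<exists>X. X \<subseteq> {1..n} \<times> {1..n} \<and> card X = t - nat \<lfloor>sqrt (real n)\<rfloor> \<and>
             real (card (fam_contain \<F> X)) \<ge> real (card \<F>) / \<rho> powr x"
        by (rule stepB[OF APi FS Ft Fc' cpos qt[unfolded q_def] xp NB'])
      then obtain X where XX: "X \<subseteq> {1..n} \<times> {1..n} \<and> card X = t - nat \<lfloor>sqrt (real n)\<rfloor> \<and>
             real (card (fam_contain \<F> X)) \<ge> real (card \<F>) / \<rho> powr x" by (rule exE)
      then have X: "X \<subseteq> {1..n} \<times> {1..n}" "card X = t - nat \<lfloor>sqrt (real n)\<rfloor>"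
          "real (card (fam_contain \<F> X)) \<ge> real (card \<F>) / \<rho> powr x" by simp_all
      have h: "(10 * real n powr (1/2 - \<delta>)) powr (- x) = inverse (\<rho> powr x)"
        unfolding \<rho>_def N_def by (rule powr_minus)
      have eq: "(10 * real n powr (1/2 - \<delta>)) powr (- x) * real (card \<F>) = real (card \<F>) / \<rho> powr x"
        unfolding h by (simp add: divide_inverse_commute)
      have le: "(10 * real n powr (1/2 - \<delta>)) powr (- x) * real (card \<F>) \<le> real (card (fam_link \<F> X))"
        unfolding eq card_link by (rule X(3))
      show "\<exists>X. X \<subseteq> {1..n} \<times> {1..n} \<and> card X = t - nat \<lfloor>sqrt (real n)\<rfloor> \<and>
                      real (card (fam_link \<F> X)) \<ge>
                        (10 * real n powr (1/2 - \<delta>)) powr (- ((1-\<delta>)^(i+1) * real (n - t)))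
                          * real (card \<F>)"
        unfolding x_def[symmetric] using X(1) X(2) le by (intro exI[of _ X] conjI)
    qed
  qed
qed

end
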